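(* Let $\Omega:=\{(z,\zeta,\eta)\in\mathbb{R}^{1+n}\times\mathbb{R}^{1+n}\times\mathbb{R}^p:(z,0)\neq(\zeta,\eta)\}$ and let $g\in C^\infty(\Omega)$ be homogeneous of degree $\alpha<-q^*$ with respect to the dilations $E_\lambda((t,x),(s,y),\eta)=(\lambda^2t,\delta_\lambda(x),\lambda^2s,\delta_\lambda(y),\delta^*_\lambda(\eta))$. Let $Z$ be a smooth vector field in the $(z,\zeta)$-variables, homogeneous of positive degree with respect to $((t,x),(s,y))\mapsto(\lambda^2t,\delta_\lambda(x),\lambda^2s,\delta_\lambda(y))$. Then: (1) for every $(z,\zeta)$ with $z\neq\zeta$, the map $\eta\mapsto g(z,\zeta,\eta)$ belongs to $L^1(\mathbb{R}^p)$; (2) for every $z,\zeta\in\mathbb{R}^{1+n}$ with $z\neq\zeta$, $$Z\Big\{(z,\zeta)\mapsto\int_{\mathbb{R}^p}g(z,\zeta,\eta)\,d\eta\Big\}=\int_{\mathbb{R}^p}Z\{(z,\zeta)\mapsto g(z,\zeta,\eta)\}\,d\eta.$$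
   Context: Here $\delta_\lambda(x)=(\lambda^{\sigma_1}x_1,\dots,\lambda^{\sigma_n}x_n)$ on $\mathbb{R}^n$ with $1=\sigma_1\le\dots\le\sigma_n$, and $\delta^*_\lambda(\eta)=(\lambda^{\sigma^*_1}\eta_1,\dots,\lambda^{\sigma^*_p}\eta_p)$ on $\mathbb{R}^p$ with positive exponents $\sigma^*_k$ (the dilations of a homogeneous Carnot group on $\mathbb{R}^n\times\mathbb{R}^p$ with dilations $(\delta_\lambda,\delta^*_\lambda)$), and $q^*=\sum_{k=1}^p\sigma^*_k$. A function $g$ is homogeneous of degree $\alpha$ w.r.t. $E_\lambda$ if $g\circ E_\lambda=\lambda^\alpha g$ for all $\lambda>0$; a vector field $Z$ is homogeneous of degree $m$ if $Z(f\circ E_\lambda)=\lambda^m(Zf)\circ E_\lambda$. *)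

theory Defs
  imports "HOL-Analysis.Analysis"
begin

text \<open>C-infinity on a set S (meant for open S): f is (Frechet) differentiable on S
  and every directional derivative x \<mapsto> f'(x) v is again C-infinity on S.
  Coinductive, i.e. derivatives of all orders exist.\<close>
coinductive smooth_on :: "'a::euclidean_space set \<Rightarrow> ('a \<Rightarrow> real) \<Rightarrow> bool" where
  "f differentiable_on S \<Longrightarrow> (\<And>v. smooth_on S (\<lambda>x. frechet_derivative f (at x) v))
     \<Longrightarrow> smooth_on S f"

definition dil :: "('n::finite \<Rightarrow> real) \<Rightarrow> real \<Rightarrow> real^'n \<Rightarrow> real^'n" where
  "dil \<sigma> r x = (\<chi> i. (r powr \<sigma> i) * x $ i)"

definition dilP :: "('n::finite \<Rightarrow> real) \<Rightarrow> real \<Rightarrow> real \<times> (real^'n) \<Rightarrow> real \<times> (real^'n)" where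
  "dilP \<sigma> r z = (r\<^sup>2 * fst z, dil \<sigma> r (snd z))"

definition dilW :: "('n::finite \<Rightarrow> real) \<Rightarrow> real
     \<Rightarrow> (real \<times> (real^'n)) \<times> (real \<times> (real^'n)) \<Rightarrow> (real \<times> (real^'n)) \<times> (real \<times> (real^'n))" where
  "dilW \<sigma> r w = (dilP \<sigma> r (fst w), dilP \<sigma> r (snd w))"

definition dilE :: "('n::finite \<Rightarrow> real) \<Rightarrow> ('p::finite \<Rightarrow> real) \<Rightarrow> real
     \<Rightarrow> (real \<times> (real^'n)) \<times> (real \<times> (real^'n)) \<times> (real^'p)
     \<Rightarrow> (real \<times> (real^'n)) \<times> (real \<times> (real^'n)) \<times> (real^'p)" where
  "dilE \<sigma> \<sigma>s r u = (dilP \<sigma> r (fst u), dilP \<sigma> r (fst (snd u)), dil \<sigma>s r (snd (snd u)))"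

definition Omega :: "((real \<times> (real^'n::finite)) \<times> (real \<times> (real^'n)) \<times> (real^'p::finite)) set" where
  "Omega = {(z, \<zeta>, \<eta>). (z, 0) \<noteq> (\<zeta>, \<eta>)}"

definition homogeneous_on :: "'a set \<Rightarrow> (real \<Rightarrow> 'a \<Rightarrow> 'a) \<Rightarrow> real \<Rightarrow> ('a \<Rightarrow> real) \<Rightarrow> bool" where
  "homogeneous_on S E \<alpha> g \<longleftrightarrow> (\<forall>r>0. \<forall>u\<in>S. g (E r u) = r powr \<alpha> * g u)"

definition vf_apply :: "('a::euclidean_space \<Rightarrow> 'a) \<Rightarrow> ('a \<Rightarrow> real) \<Rightarrow> 'a \<Rightarrow> real" where
  "vf_apply a f w = frechet_derivative f (at w) (a w)"

definition smooth_vf :: "('a::euclidean_space \<Rightarrow> 'a) \<Rightarrow> bool" where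
  "smooth_vf a \<longleftrightarrow> (\<forall>b\<in>Basis. smooth_on UNIV (\<lambda>w. a w \<bullet> b))"

definition homogeneous_vf :: "(real \<Rightarrow> 'a \<Rightarrow> 'a) \<Rightarrow> real \<Rightarrow> ('a::euclidean_space \<Rightarrow> 'a) \<Rightarrow> bool" where
  "homogeneous_vf E m a \<longleftrightarrow> (\<forall>f. smooth_on UNIV f \<longrightarrow> (\<forall>r>0. \<forall>w.
      vf_apply a (\<lambda>v. f (E r v)) w = r powr m * vf_apply a f (E r w)))"

end

theory Submission
  imports Defs "HOL-Analysis.Analysis" "HOL-Real_Asymp.Real_Asymp"
begin

lemma leibniz_general:
  fixes G :: "'w::euclidean_space \<Rightarrow> 'q::euclidean_space \<Rightarrow> real"
    and D :: "'w \<Rightarrow> 'q \<Rightarrow> 'w \<Rightarrow> real" and B :: "'q \<Rightarrow> real"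
  assumes d: "\<delta> > 0"
  and der: "\<And>w \<eta>. w \<in> ball w0 \<delta> \<Longrightarrow> ((\<lambda>w. G w \<eta>) has_derivative D w \<eta>) (at w)"
  and bG: "\<And>w \<eta>. w \<in> ball w0 \<delta> \<Longrightarrow> \<bar>G w \<eta>\<bar> \<le> B \<eta>"
  and bD: "\<And>w \<eta> h. w \<in> ball w0 \<delta> \<Longrightarrow> \<bar>D w \<eta> h\<bar> \<le> B \<eta> * norm h"
  and Bint: "integrable lborel B"
  and mG: "\<And>w. w \<in> ball w0 \<delta> \<Longrightarrow> (\<lambda>\<eta>. G w \<eta>) \<in> borel_measurable lborel"
  and mD: "\<And>h. (\<lambda>\<eta>. D w0 \<eta> h) \<in> borel_measurable lborel"
  shows "integrable lborel (G w0)" "\<And>h. integrable lborel (\<lambda>\<eta>. D w0 \<eta> h)"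
    "((\<lambda>w. \<integral>\<eta>. G w \<eta> \<partial>lborel) has_derivative (\<lambda>h. \<integral>\<eta>. D w0 \<eta> h \<partial>lborel)) (at w0)"
proof -
  have w0: "w0 \<in> ball w0 \<delta>" using d by simp
  have lin: "\<And>w \<eta>. w \<in> ball w0 \<delta> \<Longrightarrow> bounded_linear (D w \<eta>)"
    using der has_derivative_bounded_linear by blast
  have intG: "integrable lborel (G w)" if "w \<in> ball w0 \<delta>" for w
    by (rule Bochner_Integration.integrable_bound[OF Bint mG[OF that]]) (use bG[OF that] in \<open>auto intro!: AE_I2 order_trans[OF _ abs_ge_self]\<close>)
  show intD: "integrable lborel (\<lambda>\<eta>. D w0 \<eta> h)" for h
    by (rule Bochner_Integration.integrable_bound[OF integrable_mult_left[OF Bint, of "norm h"] mD])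
       (use bD[OF w0] in \<open>auto intro!: AE_I2 order_trans[OF _ abs_ge_self] simp: mult.commute\<close>)
  show "integrable lborel (G w0)" using intG[OF w0] .
  define L where "L h = (\<integral>\<eta>. D w0 \<eta> h \<partial>lborel)" for h
  have "linear L"
  proof (rule linearI)
    fix x y show "L (x + y) = L x + L y"
      unfolding L_def using lin[OF w0] intD
      by (simp add: linear_simps(1) bounded_linear.linear)
  next
    fix c :: real and x show "L (c *\<^sub>R x) = c *\<^sub>R L x"
      unfolding L_def using lin[OF w0]
      by (simp add: bounded_linear.linear linear_simps(5))
  qed
  then have blL: "bounded_linear L" by (simp add: linear_conv_bounded_linear)
  define F where "F w = (\<integral>\<eta>. G w \<eta> \<partial>lborel)" for w
  have "(\<lambda>h. norm (F (w0 + h) - F w0 - L h) / norm h) \<midarrow>0\<rightarrow> 0"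
  proof (subst tendsto_at_iff_sequentially, intro allI impI)
    fix X :: "nat \<Rightarrow> 'w"
    assume X1: "\<forall>i. X i \<in> UNIV - {0}" and X2: "X \<longlonglongrightarrow> 0"
    note X = X1 X2
    then have Xne: "\<And>i. X i \<noteq> 0" and Xl: "X \<longlonglongrightarrow> 0" by auto
    obtain N where N: "\<And>n. n \<ge> N \<Longrightarrow> norm (X n) < \<delta>"
      using Xl d unfolding LIMSEQ_iff by auto
    have inb: "w0 + X (n + N) \<in> ball w0 \<delta>" for n
      using N[of "n+N"] by (simp add: dist_norm)
    define q where "q n \<eta> = (G (w0 + X (n+N)) \<eta> - G w0 \<eta> - D w0 \<eta> (X (n+N))) / norm (X (n+N))" for n \<eta>
    have eq: "norm (F (w0 + X (n+N)) - F w0 - L (X (n+N))) / norm (X (n+N))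
        = norm (\<integral>\<eta>. q n \<eta> \<partial>lborel)" for n
    proof -
      have "F (w0 + X (n+N)) - F w0 - L (X (n+N))
          = (\<integral>\<eta>. G (w0 + X (n+N)) \<eta> - G w0 \<eta> - D w0 \<eta> (X (n+N)) \<partial>lborel)"
        unfolding F_def L_def using intG[OF inb] intG[OF w0] intD by simp
      also have "\<dots> = norm (X (n+N)) * (\<integral>\<eta>. q n \<eta> \<partial>lborel)"
        unfolding q_def using Xne[of "n+N"] by simp
      finally show ?thesis using Xne[of "n+N"] by (simp add: abs_mult)
    qed
    have lim0: "(\<lambda>n. \<integral>\<eta>. q n \<eta> \<partial>lborel) \<longlonglongrightarrow> (\<integral>\<eta>. 0 \<partial>(lborel :: 'q measure))"
    proof (rule integral_dominated_convergence[where w="\<lambda>\<eta>. 2 * B \<eta>" and s=q and f="\<lambda>_. 0"])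
      show "(\<lambda>\<eta>. 0::real) \<in> borel_measurable lborel" by simp
      show "(q n) \<in> borel_measurable lborel" for n
        unfolding q_def using mG[OF inb] mG[OF w0] mD by measurable
      show "integrable lborel (\<lambda>\<eta>. 2 * B \<eta>)" using Bint by simp
      show "AE \<eta> in lborel. (\<lambda>n. q n \<eta>) \<longlonglongrightarrow> 0"
      proof (rule AE_I2)
        fix \<eta>
        have "(\<lambda>h. norm (G (w0 + h) \<eta> - G w0 \<eta> - D w0 \<eta> h) / norm h) \<midarrow>0\<rightarrow> 0"
          using der[OF w0, of \<eta>] unfolding has_derivative_at by simp
        then have "(\<lambda>n. norm (G (w0 + X n) \<eta> - G w0 \<eta> - D w0 \<eta> (X n)) / norm (X n)) \<longlonglongrightarrow> 0"
          using X unfolding tendsto_at_iff_sequentially comp_def by blast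
        then have "(\<lambda>n. norm (G (w0 + X (n+N)) \<eta> - G w0 \<eta> - D w0 \<eta> (X (n+N))) / norm (X (n+N))) \<longlonglongrightarrow> 0"
          by (rule LIMSEQ_ignore_initial_segment[where k=N, simplified])
        then have "(\<lambda>n. norm (q n \<eta>)) \<longlonglongrightarrow> 0"
          unfolding q_def by simp
        then show "(\<lambda>n. q n \<eta>) \<longlonglongrightarrow> 0" by (rule tendsto_norm_zero_cancel)
      qed
      show "AE \<eta> in lborel. norm (q n \<eta>) \<le> 2 * B \<eta>" for n
      proof (rule AE_I2)
        fix \<eta>
        have "norm (G (w0 + X (n+N)) \<eta> - G w0 \<eta> - D w0 \<eta> (w0 + X (n+N) - w0))
            \<le> norm (w0 + X (n+N) - w0) * (2 * B \<eta>)"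
        proof (rule differentiable_bound_linearization[where S="ball w0 \<delta>" and f="\<lambda>w. G w \<eta>"
              and f'="\<lambda>w. D w \<eta>"])
          show "w0 + t *\<^sub>R (w0 + X (n + N) - w0) \<in> ball w0 \<delta>" if "t \<in> {0..1}" for t
          proof -
            have "norm (t *\<^sub>R X (n+N)) \<le> norm (X (n+N))" using that by (auto intro: mult_left_le_one_le)
            then show ?thesis using inb[of n] by (simp add: dist_norm)
          qed
          show "((\<lambda>w. G w \<eta>) has_derivative D x \<eta>) (at x within ball w0 \<delta>)" if "x \<in> ball w0 \<delta>" for x
            using der[OF that] has_derivative_at_withinI by blast
          show "onorm (D x \<eta> - D w0 \<eta>) \<le> 2 * B \<eta>" if "x \<in> ball w0 \<delta>" for x
          proof (rule onorm_le)
            fix h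
            have "\<bar>D x \<eta> h - D w0 \<eta> h\<bar> \<le> \<bar>D x \<eta> h\<bar> + \<bar>D w0 \<eta> h\<bar>" by simp
            also have "\<dots> \<le> B \<eta> * norm h + B \<eta> * norm h" using bD[OF that] bD[OF w0] by (intro add_mono)
            finally show "norm ((D x \<eta> - D w0 \<eta>) h) \<le> 2 * B \<eta> * norm h" by simp
          qed
        qed (use w0 in auto)
        then show "norm (q n \<eta>) \<le> 2 * B \<eta>"
          unfolding q_def using Xne[of "n+N"] by (simp add: divide_le_eq mult.commute)
      qed
    qed
    then have "(\<lambda>n. norm (\<integral>\<eta>. q n \<eta> \<partial>lborel)) \<longlonglongrightarrow> 0"
      using tendsto_norm by fastforce
    then have "(\<lambda>n. norm (F (w0 + X (n+N)) - F w0 - L (X (n+N))) / norm (X (n+N))) \<longlonglongrightarrow> 0"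
      unfolding eq .
    then have "(\<lambda>n. norm (F (w0 + X n) - F w0 - L (X n)) / norm (X n)) \<longlonglongrightarrow> 0"
      by (rule LIMSEQ_offset)
    then show "((\<lambda>h. norm (F (w0 + h) - F w0 - L h) / norm h) \<circ> X) \<longlonglongrightarrow> 0"
      unfolding comp_def by simp
  qed
  then have "(F has_derivative L) (at w0)" using blL unfolding has_derivative_at by simp
  then show "((\<lambda>w. \<integral>\<eta>. G w \<eta> \<partial>lborel) has_derivative (\<lambda>h. \<integral>\<eta>. D w0 \<eta> h \<partial>lborel)) (at w0)"
    unfolding F_def L_def .
qed

lemma integrable_1d_powr:
  fixes \<gamma> :: real assumes g: "\<gamma> < -1"
  shows "integrable lborel (\<lambda>t::real. (1 + \<bar>t\<bar>) powr \<gamma>)"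
proof -
  have pos: "set_integrable lborel (einterval 0 \<infinity>) (\<lambda>t::real. (1 + \<bar>t\<bar>) powr \<gamma>)"
  proof (rule interval_integral_FTC_nonneg[where F="\<lambda>t. ((1 + t) powr (\<gamma>+1) - 1) / (\<gamma>+1)"
        and A=0 and B="-1/(\<gamma>+1)"])
    show "((\<lambda>t. ((1 + t) powr (\<gamma>+1) - 1) / (\<gamma>+1)) has_real_derivative (1 + \<bar>x\<bar>) powr \<gamma>) (at x)"
      if "0 < ereal x" "ereal x < \<infinity>" for x
      using that g by (auto intro!: derivative_eq_intros)
    show "isCont (\<lambda>t::real. (1 + \<bar>t\<bar>) powr \<gamma>) x" if "0 < ereal x" for x
      using that by (auto intro!: continuous_intros)
    show "(((\<lambda>t. ((1 + t) powr (\<gamma>+1) - 1) / (\<gamma>+1)) \<circ> real_of_ereal) \<longlongrightarrow> 0) (at_right 0)"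
      using g by (auto simp: zero_ereal_def ereal_tendsto_simps intro!: tendsto_eq_intros)
    have "((\<lambda>t::real. (1 + t) powr (\<gamma>+1)) \<longlongrightarrow> 0) at_top"
      using g by real_asymp
    then have "((\<lambda>t. ((1 + t) powr (\<gamma>+1) - 1) / (\<gamma>+1)) \<longlongrightarrow> (0 - 1)/(\<gamma>+1)) at_top"
      by (intro tendsto_divide tendsto_diff tendsto_const) (use g in auto)
    then show "(((\<lambda>t. ((1 + t) powr (\<gamma>+1) - 1) / (\<gamma>+1)) \<circ> real_of_ereal) \<longlongrightarrow> -1/(\<gamma>+1)) (at_left \<infinity>)"
      unfolding ereal_tendsto_simps by simp
  qed auto
  have neg: "set_integrable lborel (einterval (-\<infinity>) 0) (\<lambda>t::real. (1 + \<bar>t\<bar>) powr \<gamma>)"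
  proof (rule interval_integral_FTC_nonneg[where F="\<lambda>t. (1 - (1 - t) powr (\<gamma>+1)) / (\<gamma>+1)"
        and A="1/(\<gamma>+1)" and B="0"])
    show "((\<lambda>t. (1 - (1 - t) powr (\<gamma>+1)) / (\<gamma>+1)) has_real_derivative (1 + \<bar>x\<bar>) powr \<gamma>) (at x)"
      if "-\<infinity> < ereal x" "ereal x < 0" for x
      using that g by (auto intro!: derivative_eq_intros)
    show "isCont (\<lambda>t::real. (1 + \<bar>t\<bar>) powr \<gamma>) x" for x
      by (auto intro!: continuous_intros)
    show "(((\<lambda>t. (1 - (1 - t) powr (\<gamma>+1)) / (\<gamma>+1)) \<circ> real_of_ereal) \<longlongrightarrow> 0) (at_left 0)"
      using g by (auto simp: zero_ereal_def ereal_tendsto_simps intro!: tendsto_eq_intros)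
    have "((\<lambda>t::real. (1 - t) powr (\<gamma>+1)) \<longlongrightarrow> 0) at_bot"
      using g by real_asymp
    then have "((\<lambda>t. (1 - (1 - t) powr (\<gamma>+1)) / (\<gamma>+1)) \<longlongrightarrow> (1 - 0)/(\<gamma>+1)) at_bot"
      by (intro tendsto_divide tendsto_diff tendsto_const) (use g in auto)
    then show "(((\<lambda>t. (1 - (1 - t) powr (\<gamma>+1)) / (\<gamma>+1)) \<circ> real_of_ereal) \<longlongrightarrow> 1/(\<gamma>+1)) (at_right (-\<infinity>))"
      unfolding ereal_tendsto_simps by simp
  qed auto
  have "set_integrable lborel (einterval (-\<infinity>) 0 \<union> einterval 0 \<infinity>) (\<lambda>t::real. (1 + \<bar>t\<bar>) powr \<gamma>)"
    by (rule set_integrable_Un[OF neg pos]) auto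
  then have "integrable lborel (\<lambda>t::real. indicator (einterval (-\<infinity>) 0 \<union> einterval 0 \<infinity>) t * (1 + \<bar>t\<bar>) powr \<gamma>)"
    unfolding set_integrable_def by simp
  then show ?thesis
  proof (rule integrable_cong_AE_imp)
    show "AE x in lborel. indicator (einterval (-\<infinity>) 0 \<union> einterval 0 \<infinity>) x * (1 + \<bar>x\<bar>) powr \<gamma> = (1 + \<bar>x\<bar>) powr \<gamma>"
      using AE_lborel_singleton[of "0::real"] by eventually_elim (auto simp: einterval_iff indicator_def)
  qed (auto intro!: borel_measurable_continuous_onI continuous_intros)
qed

lemma basis_cart_image: "(Basis :: (real^'p) set) = (\<lambda>i. axis i 1) ` UNIV"
  by (auto simp: Basis_vec_def)

lemma prod_basis_cart: "(\<Prod>b\<in>(Basis :: (real^'p) set). h b) = (\<Prod>i\<in>UNIV. h (axis i 1))"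
proof -
  have "inj (\<lambda>i::'p. axis i (1::real))" by (auto simp: inj_on_def axis_eq_axis)
  then show ?thesis unfolding basis_cart_image by (simp add: prod.reindex)
qed

lemma integrable_prod_cart:
  fixes \<gamma> :: real assumes g: "\<gamma> < -1"
  shows "integrable lborel (\<lambda>\<eta>::real^'p. \<Prod>k\<in>UNIV. (1 + \<bar>\<eta>$k\<bar>) powr \<gamma>)"
proof (rule integrableI_nonneg)
  show "(\<lambda>\<eta>::real^'p. \<Prod>k\<in>UNIV. (1 + \<bar>\<eta>$k\<bar>) powr \<gamma>) \<in> borel_measurable lborel"
    by (auto intro!: borel_measurable_continuous_onI continuous_intros)
  show "AE x in lborel. 0 \<le> (\<Prod>k\<in>UNIV. (1 + \<bar>(x::real^'p)$k\<bar>) powr \<gamma>)"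
    by (auto intro!: prod_nonneg)
  have I: "integrable lborel (\<lambda>t::real. (1 + \<bar>t\<bar>) powr \<gamma>)" by (rule integrable_1d_powr[OF g])
  then have fin: "(\<integral>\<^sup>+t. ennreal ((1 + \<bar>t\<bar>) powr \<gamma>) \<partial>(lborel::real measure)) < \<infinity>"
    by (simp add: integrable_iff_bounded)
  have "(\<integral>\<^sup>+x. ennreal (\<Prod>k\<in>UNIV. (1 + \<bar>(x::real^'p)$k\<bar>) powr \<gamma>) \<partial>lborel)
      = (\<integral>\<^sup>+x. (\<Prod>b\<in>Basis. ennreal ((1 + \<bar>(x::real^'p) \<bullet> b\<bar>) powr \<gamma>)) \<partial>lborel)"
    by (intro nn_integral_cong) (simp add: prod_basis_cart prod_ennreal cart_eq_inner_axis)
  also have "\<dots> = (\<Prod>b\<in>(Basis::(real^'p) set). (\<integral>\<^sup>+t. ennreal ((1 + \<bar>t\<bar>) powr \<gamma>) \<partial>lborel))"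
    by (rule nn_integral_lborel_prod) auto
  also have "\<dots> < \<infinity>" using fin by (simp add: power_less_top_ennreal)
  finally show "(\<integral>\<^sup>+x. ennreal (\<Prod>k\<in>UNIV. (1 + \<bar>(x::real^'p)$k\<bar>) powr \<gamma>) \<partial>lborel) < \<infinity>" .
qed

lemma dil_linear: "linear (dil \<sigma> r)"
  by (rule linearI) (simp_all add: dil_def vec_eq_iff algebra_simps)

lemma dilE_linear: "linear (dilE \<sigma> \<sigma>s r)"
  by (rule linearI) (simp_all add: dilE_def dilP_def linear_add[OF dil_linear] linear_scale[OF dil_linear] algebra_simps)

lemma dilE_bl: "bounded_linear (dilE \<sigma> \<sigma>s r)"
  using dilE_linear linear_conv_bounded_linear by blast

lemma dil_inv: "r > 0 \<Longrightarrow> dil \<sigma> r (dil \<sigma> (1/r) x) = x"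
  by (simp add: dil_def vec_eq_iff powr_divide)

lemma dilE_inv: "r > 0 \<Longrightarrow> dilE \<sigma> \<sigma>s r (dilE \<sigma> \<sigma>s (1/r) u) = u"
  by (simp add: dilE_def dilP_def dil_inv power_divide)

lemma dil_zero[simp]: "dil \<sigma> r 0 = 0"
  by (simp add: dil_def vec_eq_iff)

lemma dil_inj: "r > 0 \<Longrightarrow> dil \<sigma> r x = dil \<sigma> r y \<longleftrightarrow> x = y"
  by (auto simp: dil_def vec_eq_iff)

lemma dil_eq_0: "r > 0 \<Longrightarrow> dil \<sigma> r x = 0 \<longleftrightarrow> x = 0"
  by (metis dil_inj dil_zero)

lemma dilP_inj: "r > 0 \<Longrightarrow> dilP \<sigma> r x = dilP \<sigma> r y \<longleftrightarrow> x = y"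
  by (auto simp: dilP_def dil_inj prod_eq_iff)

lemma Omega_open: "open (Omega :: ((real \<times> (real^'n::finite)) \<times> (real \<times> (real^'n)) \<times> (real^'p::finite)) set)"
proof -
  have "Omega = {u :: (real \<times> (real^'n)) \<times> (real \<times> (real^'n)) \<times> (real^'p). (fst u, 0) \<noteq> snd u}"
    by (auto simp: Omega_def)
  also have "open \<dots>" by (intro open_Collect_neq continuous_intros)
  finally show ?thesis .
qed

lemma dilE_Omega: "r > 0 \<Longrightarrow> u \<in> Omega \<Longrightarrow> dilE \<sigma> \<sigma>s r u \<in> Omega"
  by (cases u) (auto simp: Omega_def dilE_def dilP_inj dil_eq_0)

lemma norm_pair_mono: "norm a' \<le> norm a \<Longrightarrow> norm b' \<le> norm b \<Longrightarrow> norm (a', b') \<le> norm (a, b)"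
  unfolding norm_Pair by (intro real_sqrt_le_mono add_mono power_mono) auto

lemma norm_dil_le:
  assumes "0 < r" "r \<le> 1" "\<forall>i. \<sigma> i \<ge> 0"
  shows "norm (dil \<sigma> r x) \<le> norm x"
  unfolding norm_vec_def
proof (rule L2_set_mono)
  fix i
  have "r powr \<sigma> i \<le> 1 powr \<sigma> i" using assms by (intro powr_mono2) auto
  then have "r powr \<sigma> i \<le> 1" by simp
  then show "norm (dil \<sigma> r x $ i) \<le> norm (x $ i)"
    using assms by (simp add: dil_def abs_mult mult_left_le_one_le)
qed simp

lemma norm_dilP_le:
  assumes "0 < r" "r \<le> 1" "\<forall>i. \<sigma> i \<ge> 0"
  shows "norm (dilP \<sigma> r z) \<le> norm z"
proof -
  have "\<bar>r\<^sup>2 * fst z\<bar> \<le> \<bar>fst z\<bar>" using assms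
    by (simp add: abs_mult mult_left_le_one_le power_le_one)
  then have "norm (dilP \<sigma> r z) \<le> norm (fst z, snd z)"
    unfolding dilP_def by (intro norm_pair_mono norm_dil_le assms) auto
  then show ?thesis by simp
qed

lemma norm_dilE_le:
  assumes "0 < r" "r \<le> 1" "\<forall>i. \<sigma> i \<ge> 0" "\<forall>i. \<sigma>s i \<ge> 0"
  shows "norm (dilE \<sigma> \<sigma>s r u) \<le> norm u"
proof -
  have "norm (dilE \<sigma> \<sigma>s r u) \<le> norm (fst u, fst (snd u), snd (snd u))"
    unfolding dilE_def by (intro norm_pair_mono norm_dilP_le norm_dil_le assms)
  then show ?thesis by simp
qed

lemma norm_dilW_le:
  assumes "0 < r" "r \<le> 1" "\<forall>i. \<sigma> i \<ge> 0"
  shows "norm (dilW \<sigma> r w) \<le> norm w"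
proof -
  have "norm (dilW \<sigma> r w) \<le> norm (fst w, snd w)"
    unfolding dilW_def by (intro norm_pair_mono norm_dilP_le assms)
  then show ?thesis by simp
qed

lemma hom_deriv:
  fixes g :: "'a::euclidean_space \<Rightarrow> real"
  assumes S: "open S" and ES: "\<And>r u. r > 0 \<Longrightarrow> u \<in> S \<Longrightarrow> E r u \<in> S"
    and bl: "\<And>r. bounded_linear (E r)" and gd: "g differentiable_on S"
    and hom: "homogeneous_on S E \<alpha> g" and r: "r > 0" and u: "u \<in> S"
  shows "frechet_derivative g (at (E r u)) (E r v) = r powr \<alpha> * frechet_derivative g (at u) v"
proof -
  have dA: "g differentiable (at x)" if "x \<in> S" for x
    using gd S that differentiable_on_eq_differentiable_at by blast
  have d1: "(g has_derivative frechet_derivative g (at (E r u))) (at (E r u))"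
    using dA[OF ES[OF r u]] frechet_derivative_works by blast
  have "((g \<circ> E r) has_derivative (frechet_derivative g (at (E r u)) \<circ> E r)) (at u)"
    by (rule diff_chain_at[OF bounded_linear_imp_has_derivative[OF bl] d1])
  then have c1: "((\<lambda>x. r powr \<alpha> * g x) has_derivative (frechet_derivative g (at (E r u)) \<circ> E r)) (at u)"
    by (rule has_derivative_transform_within_open[OF _ S u])
       (use hom r in \<open>auto simp: homogeneous_on_def\<close>)
  have c2: "((\<lambda>x. r powr \<alpha> * g x) has_derivative (\<lambda>v. r powr \<alpha> * frechet_derivative g (at u) v)) (at u)"
    using dA[OF u] frechet_derivative_works by (auto intro!: derivative_eq_intros)
  have "(frechet_derivative g (at (E r u)) \<circ> E r) = (\<lambda>v. r powr \<alpha> * frechet_derivative g (at u) v)"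
    by (rule has_derivative_unique[OF c1 c2])
  then show ?thesis by (metis comp_apply)
qed

definition rho :: "('p::finite \<Rightarrow> real) \<Rightarrow> real^'p \<Rightarrow> real" where
  "rho \<sigma>s \<eta> = (\<Sum>k\<in>UNIV. \<bar>\<eta>$k\<bar> powr (1 / \<sigma>s k))"

context fixes \<sigma>s :: "'p::finite \<Rightarrow> real" assumes sp: "\<forall>k. \<sigma>s k > 0"
begin

lemma rho_cont: "continuous_on UNIV (rho \<sigma>s)"
  unfolding rho_def using sp
  by (intro continuous_intros continuous_on_powr') auto

lemma rho_nonneg: "rho \<sigma>s \<eta> \<ge> 0"
  unfolding rho_def by (auto intro: sum_nonneg)

lemma rho_ge: "\<bar>\<eta>$k\<bar> powr (1 / \<sigma>s k) \<le> rho \<sigma>s \<eta>"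
  unfolding rho_def by (rule member_le_sum) auto

lemma rho_dil: "r > 0 \<Longrightarrow> rho \<sigma>s (dil \<sigma>s r \<eta>) = r * rho \<sigma>s \<eta>"
proof -
  assume r: "r > 0"
  have "\<bar>r powr \<sigma>s k * \<eta>$k\<bar> powr (1 / \<sigma>s k) = r * \<bar>\<eta>$k\<bar> powr (1 / \<sigma>s k)" for k
  proof -
    have "\<bar>r powr \<sigma>s k * \<eta>$k\<bar> powr (1 / \<sigma>s k) = (r powr \<sigma>s k) powr (1 / \<sigma>s k) * \<bar>\<eta>$k\<bar> powr (1 / \<sigma>s k)"
      using r by (simp add: abs_mult powr_mult)
    also have "(r powr \<sigma>s k) powr (1 / \<sigma>s k) = r" using r sp[rule_format, of k]
      by (simp add: powr_powr)
    finally show ?thesis .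
  qed
  then show ?thesis unfolding rho_def dil_def by (simp add: sum_distrib_left)
qed

lemma rho_pos: "\<eta> \<noteq> 0 \<Longrightarrow> rho \<sigma>s \<eta> > 0"
proof -
  assume "\<eta> \<noteq> 0"
  then obtain k where "\<eta>$k \<noteq> 0" by (auto simp: vec_eq_iff)
  then have "0 < \<bar>\<eta>$k\<bar> powr (1 / \<sigma>s k)" by simp
  then show ?thesis using rho_ge[of \<eta> k] by linarith
qed

lemma rho_le1_comp: "rho \<sigma>s \<eta> \<le> 1 \<Longrightarrow> \<bar>\<eta>$k\<bar> \<le> 1"
proof -
  assume a: "rho \<sigma>s \<eta> \<le> 1"
  have "\<bar>\<eta>$k\<bar> powr (1 / \<sigma>s k) \<le> 1" using rho_ge[of \<eta> k] a by linarith
  then have "(\<bar>\<eta>$k\<bar> powr (1 / \<sigma>s k)) powr (\<sigma>s k) \<le> 1 powr (\<sigma>s k)"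
    using sp by (intro powr_mono2) (auto simp: less_imp_le)
  then show ?thesis using sp[rule_format, of k] by (simp add: powr_powr)
qed

lemma rho_sub_bounded: "bounded {\<eta>. rho \<sigma>s \<eta> \<le> 1}"
proof -
  have "norm \<eta> \<le> real CARD('p)" if "rho \<sigma>s \<eta> \<le> 1" for \<eta>
  proof -
    have "norm \<eta> \<le> (\<Sum>k\<in>UNIV. \<bar>\<eta>$k\<bar>)" by (rule norm_le_l1_cart)
    also have "\<dots> \<le> (\<Sum>k\<in>(UNIV::'p set). 1)" by (intro sum_mono rho_le1_comp that)
    finally show ?thesis by simp
  qed
  then show ?thesis unfolding bounded_iff by blast
qed

lemma rho_le1_compact: "compact {\<eta>. rho \<sigma>s \<eta> \<le> 1}"
  using rho_sub_bounded rho_cont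
  by (auto simp: compact_eq_bounded_closed intro!: closed_Collect_le continuous_intros)

lemma rho_eq1_compact: "compact {\<eta>. rho \<sigma>s \<eta> = 1}"
proof -
  have "closed {\<eta>. rho \<sigma>s \<eta> = 1}" using rho_cont by (auto intro!: closed_Collect_eq continuous_intros)
  moreover have "bounded {\<eta>. rho \<sigma>s \<eta> = 1}" by (rule bounded_subset[OF rho_sub_bounded]) auto
  ultimately show ?thesis by (simp add: compact_eq_bounded_closed)
qed

end

definition Pb :: "real \<Rightarrow> real^'p::finite \<Rightarrow> real" where
  "Pb \<gamma> \<eta> = (\<Prod>k\<in>UNIV. 2 powr (-\<gamma>) * (1 + \<bar>\<eta>$k\<bar>) powr \<gamma>)"

lemma Pb_nonneg: "Pb \<gamma> \<eta> \<ge> 0"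
  unfolding Pb_def by (auto intro!: prod_nonneg)

context fixes \<sigma>s :: "'p::finite \<Rightarrow> real" assumes sp: "\<forall>k. \<sigma>s k > 0"
begin

lemma Pb_le1: assumes g: "\<gamma> < 0" and r: "rho \<sigma>s \<eta> \<le> 1" shows "1 \<le> Pb \<gamma> \<eta>"
  unfolding Pb_def
proof (rule prod_ge_1)
  fix k
  have "\<bar>\<eta>$k\<bar> \<le> 1" by (rule rho_le1_comp[OF sp r])
  then have "(1 + \<bar>\<eta>$k\<bar>) powr \<gamma> \<ge> 2 powr \<gamma>" using g by (intro powr_mono2') auto
  then have "2 powr (-\<gamma>) * (1 + \<bar>\<eta>$k\<bar>) powr \<gamma> \<ge> 2 powr (-\<gamma>) * 2 powr \<gamma>"
    by (intro mult_left_mono) auto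
  also have "2 powr (-\<gamma>) * 2 powr \<gamma> = (1::real)" by (simp add: powr_minus)
  finally show "1 \<le> 2 powr (-\<gamma>) * (1 + \<bar>\<eta>$k\<bar>) powr \<gamma>" .
qed

lemma Pb_ge1: assumes g: "\<gamma> < 0" and r: "rho \<sigma>s \<eta> \<ge> 1"
  shows "rho \<sigma>s \<eta> powr (\<gamma> * (\<Sum>k\<in>UNIV. \<sigma>s k)) \<le> Pb \<gamma> \<eta>"
proof -
  let ?r = "rho \<sigma>s \<eta>"
  have "?r powr (\<gamma> * (\<Sum>k\<in>UNIV. \<sigma>s k)) = ?r powr (\<Sum>k\<in>UNIV. \<gamma> * \<sigma>s k)"
    by (simp add: sum_distrib_left)
  also have "\<dots> = (\<Prod>k\<in>UNIV. ?r powr (\<gamma> * \<sigma>s k))" using r by (intro powr_sum) auto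
  also have "\<dots> \<le> Pb \<gamma> \<eta>" unfolding Pb_def
  proof (rule prod_mono, rule conjI)
    fix k
    show "0 \<le> ?r powr (\<gamma> * \<sigma>s k)" by simp
    have s: "\<sigma>s k > 0" using sp by auto
    have X1: "?r powr \<sigma>s k \<ge> 1" using r s by (intro ge_one_powr_ge_zero) auto
    have "(\<bar>\<eta>$k\<bar> powr (1 / \<sigma>s k)) powr \<sigma>s k \<le> ?r powr \<sigma>s k"
      using s by (intro powr_mono2 rho_ge[OF sp]) auto
    then have X2: "\<bar>\<eta>$k\<bar> \<le> ?r powr \<sigma>s k" using s by (simp add: powr_powr)
    have "?r powr (\<gamma> * \<sigma>s k) = (?r powr \<sigma>s k) powr \<gamma>" by (simp add: powr_powr mult.commute)
    also have "\<dots> \<le> ((1 + \<bar>\<eta>$k\<bar>) / 2) powr \<gamma>"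
      using g X1 X2 by (intro powr_mono2') auto
    also have "\<dots> = 2 powr (-\<gamma>) * (1 + \<bar>\<eta>$k\<bar>) powr \<gamma>"
      by (simp add: powr_divide powr_minus field_simps)
    finally show "?r powr (\<gamma> * \<sigma>s k) \<le> 2 powr (-\<gamma>) * (1 + \<bar>\<eta>$k\<bar>) powr \<gamma>" .
  qed
  finally show ?thesis .
qed

end

lemma Pb_integrable: assumes "\<gamma> < -1" shows "integrable lborel (Pb \<gamma> :: real^'p::finite \<Rightarrow> real)"
proof -
  have "Pb \<gamma> = (\<lambda>\<eta>::real^'p. (2 powr (-\<gamma>)) ^ CARD('p) * (\<Prod>k\<in>UNIV. (1 + \<bar>\<eta>$k\<bar>) powr \<gamma>))"
    by (auto simp: Pb_def prod.distrib)
  then show ?thesis using integrable_prod_cart[OF assms] by simp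
qed

lemma linear_bound_basis:
  fixes f :: "'a::euclidean_space \<Rightarrow> real"
  assumes "bounded_linear f"
  shows "\<bar>f v\<bar> \<le> (\<Sum>b\<in>Basis. \<bar>f b\<bar>) * norm v"
proof -
  interpret bounded_linear f by fact
  have "f v = f (\<Sum>b\<in>Basis. (v \<bullet> b) *\<^sub>R b)" by (simp add: euclidean_representation)
  also have "\<dots> = (\<Sum>b\<in>Basis. (v \<bullet> b) * f b)" by (simp add: sum scale)
  finally have "\<bar>f v\<bar> \<le> (\<Sum>b\<in>Basis. \<bar>v \<bullet> b\<bar> * \<bar>f b\<bar>)"
    by (simp add: abs_mult[symmetric] sum_abs)
  also have "\<dots> \<le> (\<Sum>b\<in>Basis. norm v * \<bar>f b\<bar>)"
    by (intro sum_mono mult_right_mono Basis_le_norm) auto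
  finally show ?thesis by (simp add: sum_distrib_left mult.commute)
qed

lemma normJ: "norm (fst h, snd h, 0::'c::real_normed_vector) = norm (h :: 'a::real_normed_vector \<times> 'b::real_normed_vector)"
  by (cases h) (simp add: norm_Pair)

theorem lemma3p1:
  fixes \<sigma> :: "'n::finite \<Rightarrow> real" and \<sigma>s :: "'p::finite \<Rightarrow> real"
    and g :: "(real \<times> (real^'n)) \<times> (real \<times> (real^'n)) \<times> (real^'p) \<Rightarrow> real"
    and a :: "(real \<times> (real^'n)) \<times> (real \<times> (real^'n)) \<Rightarrow> (real \<times> (real^'n)) \<times> (real \<times> (real^'n))"
    and \<alpha> m :: real
  assumes sigma_ge1: "\<forall>i. \<sigma> i \<ge> 1" and sigma_one: "\<exists>i. \<sigma> i = 1"
    and sigmas_pos: "\<forall>k. \<sigma>s k > 0"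
    and g_smooth: "smooth_on (Omega :: ((real \<times> (real^'n)) \<times> (real \<times> (real^'n)) \<times> (real^'p)) set) g"
    and g_hom: "homogeneous_on Omega (dilE \<sigma> \<sigma>s) \<alpha> g"
    and alpha_lt: "\<alpha> < - (\<Sum>k\<in>UNIV. \<sigma>s k)"
    and Z_smooth: "smooth_vf a"
    and m_pos: "m > 0"
    and Z_hom: "homogeneous_vf (dilW \<sigma>) m a"
  shows "(\<forall>z \<zeta>. z \<noteq> \<zeta> \<longrightarrow> integrable lborel (\<lambda>\<eta>. g (z, \<zeta>, \<eta>)))
    \<and> (\<forall>z \<zeta>. z \<noteq> \<zeta> \<longrightarrow>
          (\<lambda>w. \<integral>\<eta>. g (fst w, snd w, \<eta>) \<partial>lborel) differentiable (at (z, \<zeta>))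
        \<and> integrable lborel (\<lambda>\<eta>. vf_apply a (\<lambda>w. g (fst w, snd w, \<eta>)) (z, \<zeta>))
        \<and> vf_apply a (\<lambda>w. \<integral>\<eta>. g (fst w, snd w, \<eta>) \<partial>lborel) (z, \<zeta>)
          = (\<integral>\<eta>. vf_apply a (\<lambda>w. g (fst w, snd w, \<eta>)) (z, \<zeta>) \<partial>lborel))"
proof -
  let ?O = "Omega :: ((real \<times> (real^'n)) \<times> (real \<times> (real^'n)) \<times> (real^'p)) set"
  define fd where "fd u = frechet_derivative g (at u)" for u
  have sm: "g differentiable_on ?O \<and> (\<forall>v. smooth_on ?O (\<lambda>x. frechet_derivative g (at x) v))"
    using g_smooth by (cases rule: smooth_on.cases) auto
  have gd: "g differentiable_on ?O" using sm by blast
  have gc: "continuous_on ?O g" using gd by (rule differentiable_imp_continuous_on)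
  have fdc: "continuous_on ?O (\<lambda>u. fd u v)" for v
  proof -
    have "smooth_on ?O (\<lambda>x. frechet_derivative g (at x) v)" using sm by blast
    then have "(\<lambda>x. frechet_derivative g (at x) v) differentiable_on ?O"
      by (cases rule: smooth_on.cases) auto
    then show ?thesis unfolding fd_def by (rule differentiable_imp_continuous_on)
  qed
  have gder: "(g has_derivative fd u) (at u)" if "u \<in> ?O" for u
    using gd Omega_open that differentiable_on_eq_differentiable_at frechet_derivative_works
    unfolding fd_def by blast
  have fdbl: "bounded_linear (fd u)" if "u \<in> ?O" for u
    using gder[OF that] has_derivative_bounded_linear by blast
  have hd: "fd (dilE \<sigma> \<sigma>s r u) (dilE \<sigma> \<sigma>s r v) = r powr \<alpha> * fd u v" if "r > 0" "u \<in> ?O" for r u v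
    unfolding fd_def
    by (rule hom_deriv[OF Omega_open _ dilE_bl gd g_hom that]) (rule dilE_Omega)
  define q where "q = (\<Sum>k\<in>UNIV. \<sigma>s k)"
  have qpos: "q > 0" unfolding q_def using sigmas_pos
    by (intro sum_pos) auto
  define \<gamma> where "\<gamma> = \<alpha> / q"
  have alpha_eq: "\<alpha> = \<gamma> * q" using qpos unfolding \<gamma>_def by simp
  have glt: "\<gamma> < -1" using alpha_lt qpos unfolding \<gamma>_def q_def[symmetric] by (simp add: divide_less_eq)
  define \<Phi> where "\<Phi> u = \<bar>g u\<bar> + (\<Sum>b\<in>Basis. \<bar>fd u b\<bar>)" for u
  have \<Phi>c: "continuous_on ?O \<Phi>"
    unfolding \<Phi>_def by (intro continuous_intros gc fdc)
  have \<Phi>g: "\<bar>g u\<bar> \<le> \<Phi> u" for u unfolding \<Phi>_def by (auto intro: sum_nonneg)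
  have \<Phi>d: "\<bar>fd u v\<bar> \<le> \<Phi> u * norm v" if "u \<in> ?O" for u v
  proof -
    have "\<bar>fd u v\<bar> \<le> (\<Sum>b\<in>Basis. \<bar>fd u b\<bar>) * norm v" by (rule linear_bound_basis[OF fdbl[OF that]])
    also have "\<dots> \<le> \<Phi> u * norm v" unfolding \<Phi>_def by (intro mult_right_mono) auto
    finally show ?thesis .
  qed
  define emb where "emb p = (fst (fst p), snd (fst p), snd p)"
    for p :: "((real \<times> (real^'n)) \<times> (real \<times> (real^'n))) \<times> (real^'p)"
  have embc: "continuous_on UNIV emb" unfolding emb_def by (intro continuous_intros)
  have main: "\<exists>\<delta>>0. \<exists>M. (\<forall>w\<in>ball (z, \<zeta>) \<delta>. \<forall>\<eta>. (fst w, snd w, \<eta>) \<in> ?O \<and>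
       \<bar>g (fst w, snd w, \<eta>)\<bar> \<le> M * Pb \<gamma> \<eta> \<and>
       (\<forall>h. \<bar>fd (fst w, snd w, \<eta>) (fst h, snd h, 0)\<bar> \<le> M * Pb \<gamma> \<eta> * norm h))"
    if zz: "z \<noteq> \<zeta>" for z \<zeta>
  proof -
    define \<delta> where "\<delta> = norm (z - \<zeta>) / 3"
    have dpos: "\<delta> > 0" using zz unfolding \<delta>_def by simp
    have neq: "fst w \<noteq> snd w" if "w \<in> cball (z, \<zeta>) \<delta>" for w
    proof
      assume e: "fst w = snd w"
      have n: "norm (w - (z, \<zeta>)) \<le> \<delta>" using that by (simp add: dist_norm norm_minus_commute)
      have wz: "w - (z, \<zeta>) = (fst w - z, snd w - \<zeta>)" by (cases w) simp
      have "norm (fst w - z) \<le> \<delta>" using n norm_fst_le[of "fst w - z" "snd w - \<zeta>"] unfolding wz by simp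
      moreover have "norm (snd w - \<zeta>) \<le> \<delta>" using n norm_snd_le[of "snd w - \<zeta>" "fst w - z"] unfolding wz by simp
      ultimately have "norm (z - \<zeta>) \<le> 2 * \<delta>" using e norm_triangle_ineq4[of "fst w - z" "snd w - \<zeta>"]
        by (simp add: norm_minus_commute)
      then show False using dpos unfolding \<delta>_def by simp
    qed
    define R where "R = norm (z, \<zeta>) + \<delta>"
    define K1 where "K1 = emb ` (cball (z, \<zeta>) \<delta> \<times> {\<eta>. rho \<sigma>s \<eta> \<le> 1})"
    define K2 where "K2 = emb ` (cball 0 R \<times> {\<eta>. rho \<sigma>s \<eta> = 1})"
    have cK: "compact (K1 \<union> K2)" unfolding K1_def K2_def
      by (intro compact_Un compact_continuous_image continuous_on_subset[OF embc] compact_Times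
          rho_le1_compact[OF sigmas_pos] rho_eq1_compact[OF sigmas_pos] compact_cball) auto
    have K1O: "K1 \<subseteq> ?O"
    proof
      fix u assume "u \<in> K1"
      then obtain w \<eta> where w: "w \<in> cball (z, \<zeta>) \<delta>" and u: "u = (fst w, snd w, \<eta>)"
        unfolding K1_def emb_def by auto
      show "u \<in> ?O" using neq[OF w] unfolding u Omega_def by auto
    qed
    have rho0: "rho \<sigma>s 0 = 0" by (simp add: rho_def)
    have K2O: "K2 \<subseteq> ?O" unfolding K2_def emb_def Omega_def using rho0 by auto
    have "bounded (\<Phi> ` (K1 \<union> K2))"
      by (intro compact_imp_bounded compact_continuous_image continuous_on_subset[OF \<Phi>c] cK)
         (use K1O K2O in auto)
    then obtain M where Mpos: "M > 0" and M: "\<And>u. u \<in> K1 \<union> K2 \<Longrightarrow> \<Phi> u \<le> M"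
      unfolding bounded_pos by force
    have "\<forall>w\<in>ball (z, \<zeta>) \<delta>. \<forall>\<eta>. (fst w, snd w, \<eta>) \<in> ?O \<and>
       \<bar>g (fst w, snd w, \<eta>)\<bar> \<le> M * Pb \<gamma> \<eta> \<and>
       (\<forall>h. \<bar>fd (fst w, snd w, \<eta>) (fst h, snd h, 0)\<bar> \<le> M * Pb \<gamma> \<eta> * norm h)"
    proof (intro ballI allI)
      fix w and \<eta> :: "real^'p"
      assume w: "w \<in> ball (z, \<zeta>) \<delta>"
      let ?u = "(fst w, snd w, \<eta>)"
      have uO: "?u \<in> ?O" using neq[of w] w unfolding Omega_def by auto
      have "\<bar>g ?u\<bar> \<le> M * Pb \<gamma> \<eta> \<and> (\<forall>h. \<bar>fd ?u (fst h, snd h, 0)\<bar> \<le> M * Pb \<gamma> \<eta> * norm h)"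
      proof (cases "rho \<sigma>s \<eta> \<le> 1")
        case True
        have uK: "?u \<in> K1" unfolding K1_def emb_def using w True
          by (intro image_eqI[of _ _ "(w, \<eta>)"]) auto
        have P1: "1 \<le> Pb \<gamma> \<eta>" using Pb_le1[OF sigmas_pos _ True] glt by simp
        have MM: "M \<le> M * Pb \<gamma> \<eta>" using P1 Mpos by simp
        show ?thesis
        proof (intro conjI allI)
          show "\<bar>g ?u\<bar> \<le> M * Pb \<gamma> \<eta>" using \<Phi>g[of ?u] M[of ?u] uK MM by auto
          fix h :: "(real \<times> (real^'n)) \<times> (real \<times> (real^'n))"
          have "\<bar>fd ?u (fst h, snd h, 0)\<bar> \<le> \<Phi> ?u * norm (fst h, snd h, 0::real^'p)" by (rule \<Phi>d[OF uO])
          also have "norm (fst h, snd h, 0::real^'p) = norm h" by (simp only: normJ)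
          also have "\<Phi> ?u * norm h \<le> M * Pb \<gamma> \<eta> * norm h"
            using M[of ?u] uK MM by (intro mult_right_mono) auto
          finally show "\<bar>fd ?u (fst h, snd h, 0)\<bar> \<le> M * Pb \<gamma> \<eta> * norm h" .
        qed
      next
        case False
        define r where "r = rho \<sigma>s \<eta>"
        have r1: "r > 1" using False unfolding r_def by simp
        have rpos: "r > 0" using r1 by simp
        define u' where "u' = dilE \<sigma> \<sigma>s (1/r) ?u"
        have uu: "?u = dilE \<sigma> \<sigma>s r u'" unfolding u'_def by (simp add: dilE_inv[OF rpos])
        have "norm (dilW \<sigma> (1/r) w) \<le> norm w"
          using r1 sigma_ge1 by (intro norm_dilW_le) (auto intro: order_trans[of 0 1])
        also have "norm w \<le> R" using w unfolding R_def
          using norm_triangle_ineq2[of w "(z, \<zeta>)"] by (simp add: dist_norm norm_minus_commute)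
        finally have nw: "norm (dilW \<sigma> (1/r) w) \<le> R" .
        have rho1: "rho \<sigma>s (dil \<sigma>s (1/r) \<eta>) = 1"
          using rpos by (simp add: rho_dil[OF sigmas_pos] r_def)
        have u'K: "u' \<in> K2" unfolding K2_def emb_def u'_def
          using nw rho1 by (intro image_eqI[of _ _ "(dilW \<sigma> (1/r) w, dil \<sigma>s (1/r) \<eta>)"])
            (auto simp: dilE_def dilW_def)
        have u'O: "u' \<in> ?O" using u'K K2O by auto
        have Pr: "r powr \<alpha> \<le> Pb \<gamma> \<eta>"
          using Pb_ge1[OF sigmas_pos, of \<gamma> \<eta>] glt r1 unfolding alpha_eq q_def r_def by simp
        have MP: "r powr \<alpha> * M \<le> M * Pb \<gamma> \<eta>" using Pr Mpos by (simp add: mult.commute)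
        show ?thesis
        proof (intro conjI allI)
          have "g ?u = r powr \<alpha> * g u'" using g_hom rpos u'O unfolding uu homogeneous_on_def by blast
          then have "\<bar>g ?u\<bar> = r powr \<alpha> * \<bar>g u'\<bar>" by (simp add: abs_mult)
          also have "\<dots> \<le> r powr \<alpha> * M" using \<Phi>g[of u'] M[of u'] u'K by (intro mult_left_mono) auto
          finally show "\<bar>g ?u\<bar> \<le> M * Pb \<gamma> \<eta>" using MP by linarith
          fix h :: "(real \<times> (real^'n)) \<times> (real \<times> (real^'n))"
          let ?v = "(fst h, snd h, 0::real^'p)"
          have "fd ?u ?v = fd (dilE \<sigma> \<sigma>s r u') (dilE \<sigma> \<sigma>s r (dilE \<sigma> \<sigma>s (1/r) ?v))"
            unfolding uu by (simp add: dilE_inv[OF rpos])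
          also have "\<dots> = r powr \<alpha> * fd u' (dilE \<sigma> \<sigma>s (1/r) ?v)" by (rule hd[OF rpos u'O])
          finally have "\<bar>fd ?u ?v\<bar> = r powr \<alpha> * \<bar>fd u' (dilE \<sigma> \<sigma>s (1/r) ?v)\<bar>" by (simp add: abs_mult)
          also have "\<dots> \<le> r powr \<alpha> * (\<Phi> u' * norm (dilE \<sigma> \<sigma>s (1/r) ?v))"
            by (intro mult_left_mono \<Phi>d[OF u'O]) auto
          also have "\<dots> \<le> r powr \<alpha> * (M * norm h)"
          proof (intro mult_left_mono mult_mono)
            show "\<Phi> u' \<le> M" using M u'K by auto
            have "norm (dilE \<sigma> \<sigma>s (1/r) ?v) \<le> norm ?v"
              using r1 sigma_ge1 sigmas_pos
              by (intro norm_dilE_le) (auto intro: order_trans[of 0 1] less_imp_le)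
            then show "norm (dilE \<sigma> \<sigma>s (1/r) ?v) \<le> norm h" by (simp only: normJ)
          qed (use Mpos in auto)
          also have "\<dots> = (r powr \<alpha> * M) * norm h" by simp
          also have "\<dots> \<le> M * Pb \<gamma> \<eta> * norm h" using MP by (intro mult_right_mono) auto
          finally show "\<bar>fd ?u ?v\<bar> \<le> M * Pb \<gamma> \<eta> * norm h" .
        qed
      qed
      then show "?u \<in> ?O \<and> \<bar>g ?u\<bar> \<le> M * Pb \<gamma> \<eta> \<and> (\<forall>h. \<bar>fd ?u (fst h, snd h, 0)\<bar> \<le> M * Pb \<gamma> \<eta> * norm h)"
        using uO by blast
    qed
    then show ?thesis using dpos by blast
  qed
  have key: "integrable lborel (\<lambda>\<eta>. g (z, \<zeta>, \<eta>))
        \<and> (\<lambda>w. \<integral>\<eta>. g (fst w, snd w, \<eta>) \<partial>lborel) differentiable (at (z, \<zeta>))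
        \<and> integrable lborel (\<lambda>\<eta>. vf_apply a (\<lambda>w. g (fst w, snd w, \<eta>)) (z, \<zeta>))
        \<and> vf_apply a (\<lambda>w. \<integral>\<eta>. g (fst w, snd w, \<eta>) \<partial>lborel) (z, \<zeta>)
          = (\<integral>\<eta>. vf_apply a (\<lambda>w. g (fst w, snd w, \<eta>)) (z, \<zeta>) \<partial>lborel)"
    if zz: "z \<noteq> \<zeta>" for z \<zeta>
  proof -
    obtain \<delta> M where dpos: "\<delta> > 0" and H: "\<And>w \<eta>. w \<in> ball (z, \<zeta>) \<delta> \<Longrightarrow> (fst w, snd w, \<eta>) \<in> ?O \<and>
       \<bar>g (fst w, snd w, \<eta>)\<bar> \<le> M * Pb \<gamma> \<eta> \<and>
       (\<forall>h. \<bar>fd (fst w, snd w, \<eta>) (fst h, snd h, 0)\<bar> \<le> M * Pb \<gamma> \<eta> * norm h)"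
      using main[OF zz] by blast
    define G where "G w \<eta> = g (fst w, snd w, \<eta>)" for w and \<eta> :: "real^'p"
    define D where "D w \<eta> h = fd (fst w, snd w, \<eta>) (fst h, snd h, 0::real^'p)"
      for w h :: "(real \<times> (real^'n)) \<times> (real \<times> (real^'n))" and \<eta> :: "real^'p"
    have der: "((\<lambda>w. G w \<eta>) has_derivative D w \<eta>) (at w)" if w: "w \<in> ball (z, \<zeta>) \<delta>" for w \<eta>
    proof -
      have u: "(fst w, snd w, \<eta>) \<in> ?O" using H[OF w] by blast
      have e: "((\<lambda>w. (fst w, snd w, \<eta>)) has_derivative (\<lambda>h. (fst h, snd h, 0))) (at w)"
        by (auto intro!: derivative_eq_intros)
      from diff_chain_at[OF e gder[OF u]] show ?thesis
        unfolding G_def D_def comp_def .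
    qed
    have bG: "\<bar>G w \<eta>\<bar> \<le> M * Pb \<gamma> \<eta>" if "w \<in> ball (z, \<zeta>) \<delta>" for w \<eta>
      using H[OF that] unfolding G_def by blast
    have bD: "\<bar>D w \<eta> h\<bar> \<le> M * Pb \<gamma> \<eta> * norm h" if "w \<in> ball (z, \<zeta>) \<delta>" for w \<eta> h
      using H[OF that] unfolding D_def by blast
    have Bint: "integrable lborel (\<lambda>\<eta>::real^'p. M * Pb \<gamma> \<eta>)"
      by (rule integrable_mult_right) (rule Pb_integrable[OF glt])
    have mG: "(\<lambda>\<eta>. G w \<eta>) \<in> borel_measurable lborel" if w: "w \<in> ball (z, \<zeta>) \<delta>" for w
    proof -
      have "continuous_on UNIV (\<lambda>\<eta>. g (fst w, snd w, \<eta>))"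
        by (rule continuous_on_compose2[OF gc, of UNIV "\<lambda>\<eta>. (fst w, snd w, \<eta>)"])
           (use H[OF w] in \<open>auto intro!: continuous_intros\<close>)
      then show ?thesis unfolding G_def by (simp add: borel_measurable_continuous_onI)
    qed
    have w0: "(z, \<zeta>) \<in> ball (z, \<zeta>) \<delta>" using dpos by simp
    have mD: "(\<lambda>\<eta>. D (z, \<zeta>) \<eta> h) \<in> borel_measurable lborel" for h
    proof -
      have "continuous_on UNIV (\<lambda>\<eta>. fd (z, \<zeta>, \<eta>) (fst h, snd h, 0::real^'p))"
        by (rule continuous_on_compose2[OF fdc, of UNIV "\<lambda>\<eta>. (z, \<zeta>, \<eta>)"])
           (use H[OF w0] in \<open>auto intro!: continuous_intros\<close>)
      then show ?thesis unfolding D_def by (simp add: borel_measurable_continuous_onI)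
    qed
    note L = leibniz_general[OF dpos der bG bD Bint mG mD]
    have vf1: "vf_apply a (\<lambda>w. g (fst w, snd w, \<eta>)) (z, \<zeta>) = D (z, \<zeta>) \<eta> (a (z, \<zeta>))" for \<eta>
      using frechet_derivative_at[OF der[OF w0, of \<eta>]] unfolding vf_apply_def G_def by simp
    have F: "(\<lambda>w. \<integral>\<eta>. g (fst w, snd w, \<eta>) \<partial>lborel) = (\<lambda>w. \<integral>\<eta>. G w \<eta> \<partial>lborel)"
      unfolding G_def ..
    have vf2: "vf_apply a (\<lambda>w. \<integral>\<eta>. g (fst w, snd w, \<eta>) \<partial>lborel) (z, \<zeta>)
        = (\<integral>\<eta>. D (z, \<zeta>) \<eta> (a (z, \<zeta>)) \<partial>lborel)"
      using frechet_derivative_at[OF L(3)] unfolding vf_apply_def F by metis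
    show ?thesis
    proof (intro conjI)
      show "integrable lborel (\<lambda>\<eta>. g (z, \<zeta>, \<eta>))" using L(1) unfolding G_def by simp
      show "(\<lambda>w. \<integral>\<eta>. g (fst w, snd w, \<eta>) \<partial>lborel) differentiable (at (z, \<zeta>))"
        unfolding F differentiable_def using L(3) by blast
      show "integrable lborel (\<lambda>\<eta>. vf_apply a (\<lambda>w. g (fst w, snd w, \<eta>)) (z, \<zeta>))"
        unfolding vf1 by (rule L(2))
      show "vf_apply a (\<lambda>w. \<integral>\<eta>. g (fst w, snd w, \<eta>) \<partial>lborel) (z, \<zeta>)
          = (\<integral>\<eta>. vf_apply a (\<lambda>w. g (fst w, snd w, \<eta>)) (z, \<zeta>) \<partial>lborel)"
        unfolding vf2 vf1 ..
    qed
  qed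
  show ?thesis using key by blast
qed

end
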